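(* Let $b$ be a nonzero integer and let $A,B,C$ be integers with $\gcd(A,2B,C)=1$ such that the binary quadratic form $Ax^2+2Bxy+Cy^2$ has discriminant $(2B)^2-4AC=-8b^2$. Then for every positive divisor $d$ of $2b^2$ and every $W>0$, $$\#\{(m,n)\in\mathbb{Z}^2:\ |m|,|n|\le W,\ Am^2-2Bmn+Cn^2\equiv0\pmod d\}\ll W^2d^{-1/2}+W,$$ with an absolute implied constant. *)

theory Defs
  imports Complex_Main
begin

end

theory Submission
  imports Defs
begin

lemma count_cls:
  fixes X :: "int set" and W :: real and k :: int
  assumes fin: "finite X" and kpos: "k > 0" and W0: "W \<ge> 0"
    and bnd: "\<forall>x\<in>X. \<bar>real_of_int x\<bar> \<le> W"
    and dv: "\<forall>x\<in>X. \<forall>y\<in>X. k dvd x - y"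
  shows "real (card X) \<le> 2 * W / k + 1"
proof (cases "X = {}")
  case True
  then show ?thesis using W0 kpos by simp
next
  case False
  define x0 where "x0 = Min X"
  have x0X: "x0 \<in> X" using fin False by (simp add: x0_def)
  have x0le: "\<And>x. x \<in> X \<Longrightarrow> x0 \<le> x" using fin by (simp add: x0_def)
  define f where "f x = (x - x0) div k" for x
  have fe: "x - x0 = k * f x" if "x \<in> X" for x
    using dv that x0X by (simp add: f_def)
  have inj: "inj_on f X"
  proof (rule inj_onI)
    fix x y assume "x \<in> X" "y \<in> X" "f x = f y"
    then show "x = y" using fe[of x] fe[of y] by simp
  qed
  define F where "F = \<lfloor>2 * W / k\<rfloor>"
  have img: "f ` X \<subseteq> {0..F}"
  proof
    fix z assume "z \<in> f ` X"
    then obtain x where x: "x \<in> X" "z = f x" by auto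
    have e: "real_of_int (x - x0) = real_of_int k * real_of_int z" using fe[OF x(1)] x(2) by simp
    have "\<bar>real_of_int x\<bar> \<le> W" "\<bar>real_of_int x0\<bar> \<le> W" using bnd x(1) x0X by auto
    then have "real_of_int (x - x0) \<le> 2 * W" by simp
    then have "real_of_int k * real_of_int z \<le> 2 * W" using e by simp
    then have "real_of_int z \<le> 2 * W / k" using kpos by (simp add: field_simps mult.commute)
    then have "z \<le> F" unfolding F_def by linarith
    moreover have "0 \<le> k * z" using fe[OF x(1)] x0le[OF x(1)] x(2) by simp
    then have "0 \<le> z" using kpos by (simp add: zero_le_mult_iff)
    ultimately show "z \<in> {0..F}" by simp
  qed
  have "card X = card (f ` X)" using inj by (simp add: card_image)
  also have "\<dots> \<le> card {0..F}" using img by (intro card_mono) simp_all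
  also have "card {0..F} = nat (F + 1)" by simp
  finally have c: "card X \<le> nat (F + 1)" .
  have "F \<ge> 0" unfolding F_def using W0 kpos by simp
  then have "real (nat (F + 1)) = real_of_int F + 1" by simp
  also have "\<dots> \<le> 2 * W / k + 1" unfolding F_def by linarith
  finally show ?thesis using c by linarith
qed

lemma least_sq:
  fixes d :: int
  assumes "d > 0"
  obtains N :: int where "N > 0" "d dvd N^2" "\<And>z. d dvd z^2 \<Longrightarrow> N dvd z"
proof -
  define n where "n = (LEAST k::nat. k > 0 \<and> d dvd (int k)^2)"
  have ex: "\<exists>k::nat. k > 0 \<and> d dvd (int k)^2"
    by (rule exI[of _ "nat d"]) (use assms in simp)
  have n: "n > 0 \<and> d dvd (int n)^2" unfolding n_def by (rule LeastI_ex[OF ex])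
  have mn: "\<And>k::nat. k > 0 \<Longrightarrow> d dvd (int k)^2 \<Longrightarrow> n \<le> k" unfolding n_def by (rule Least_le) simp
  have "int n dvd z" if z: "d dvd z^2" for z
  proof -
    define g where "g = gcd z (int n)"
    have gpos: "g > 0" using n by (simp add: g_def)
    have "g^2 = gcd (z^2) ((int n)^2)" by (simp add: g_def gcd_exp)
    then have "d dvd g^2" using z n by (metis gcd_greatest)
    then have "n \<le> nat g" using mn[of "nat g"] gpos by simp
    moreover have "g dvd int n" by (simp add: g_def)
    then have "g \<le> int n" using n by (simp add: zdvd_imp_le)
    ultimately have "g = int n" using gpos by linarith
    then show ?thesis by (metis g_def gcd_dvd1)
  qed
  then show ?thesis using that[of "int n"] n by simp
qed

theorem lemma3p16:
  shows "\<exists>K::real. K > 0 \<and>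
    (\<forall>(b::int) (A::int) (B::int) (C::int) (d::int) (W::real).
       b \<noteq> 0 \<longrightarrow> gcd (gcd A (2 * B)) C = 1 \<longrightarrow>
       (2 * B)^2 - 4 * A * C = - 8 * b^2 \<longrightarrow>
       d > 0 \<longrightarrow> d dvd 2 * b^2 \<longrightarrow> W \<ge> 1 \<longrightarrow>
       real (card {(m::int, n::int). \<bar>real_of_int m\<bar> \<le> W \<and> \<bar>real_of_int n\<bar> \<le> W \<and>
                  d dvd (A * m^2 - 2 * B * m * n + C * n^2)})
         \<le> K * (W^2 / sqrt (real_of_int d) + W))"
proof (intro exI[of _ 5] conjI allI impI)
  fix b A B C d :: int and W :: real
  assume hb: "b \<noteq> 0" and hg: "gcd (gcd A (2 * B)) C = 1"
    and hD: "(2 * B)^2 - 4 * A * C = - 8 * b^2" and hd: "d > 0"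
    and hdd: "d dvd 2 * b^2" and hW: "W \<ge> 1"
  have AC: "A * C - B^2 = 2 * b^2" using hD by (simp add: power2_eq_square algebra_simps)
  obtain N where N0: "N > 0" and dN: "d dvd N^2" and Nz: "\<And>z. d dvd z^2 \<Longrightarrow> N dvd z"
    using least_sq[OF hd] by blast
  define S where "S = {(m::int, n::int). \<bar>real_of_int m\<bar> \<le> W \<and> \<bar>real_of_int n\<bar> \<le> W \<and>
                  d dvd (A * m^2 - 2 * B * m * n + C * n^2)}"
  define T where "T = {(m::int, n::int). \<bar>real_of_int m\<bar> \<le> W \<and> \<bar>real_of_int n\<bar> \<le> W \<and>
                  N dvd (A * m - B * n) \<and> N dvd (C * n - B * m)}"
  have ST: "S \<subseteq> T"
  proof
    fix p assume "p \<in> S"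
    then obtain m n where p: "p = (m, n)" and bm: "\<bar>real_of_int m\<bar> \<le> W" "\<bar>real_of_int n\<bar> \<le> W"
      and dq: "d dvd (A * m^2 - 2 * B * m * n + C * n^2)" unfolding S_def by auto
    have e1: "A * (A * m^2 - 2 * B * m * n + C * n^2) = (A * m - B * n)^2 + (A * C - B^2) * n^2"
      by (simp add: power2_eq_square algebra_simps)
    have e2: "C * (A * m^2 - 2 * B * m * n + C * n^2) = (C * n - B * m)^2 + (A * C - B^2) * m^2"
      by (simp add: power2_eq_square algebra_simps)
    have "d dvd (A * C - B^2) * n^2" "d dvd (A * C - B^2) * m^2" using AC hdd by auto
    moreover have "d dvd A * (A * m^2 - 2 * B * m * n + C * n^2)"
      "d dvd C * (A * m^2 - 2 * B * m * n + C * n^2)" using dq by auto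
    ultimately have "d dvd (A * m - B * n)^2" "d dvd (C * n - B * m)^2"
      using e1 e2 by (metis add_diff_cancel_right' dvd_diff)+
    then show "p \<in> T" using Nz bm p unfolding T_def by auto
  qed
  define e where "e = gcd (gcd A B) N"
  have e0: "e > 0" using N0 by (simp add: e_def)
  have eN: "e dvd N" by (simp add: e_def)
  then obtain M where NM: "N = e * M" by blast
  have M0: "M > 0" using N0 e0 NM by (simp add: zero_less_mult_iff)
  have ceq: "gcd e C = 1"
  proof -
    have "gcd e C dvd A" "gcd e C dvd B" "gcd e C dvd C"
      by (auto simp: e_def intro: dvd_trans[OF gcd_dvd1])
    then have "gcd e C dvd A" "gcd e C dvd 2 * B" "gcd e C dvd C" by auto
    then have "gcd e C dvd gcd (gcd A (2 * B)) C" by simp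
    then show ?thesis using hg by simp
  qed
  have Tn: "e dvd n" if "(m, n) \<in> T" for m n
  proof -
    have "N dvd C * n - B * m" using that by (simp add: T_def)
    then have "e dvd C * n - B * m" using eN dvd_trans by blast
    moreover have "e dvd B * m" by (simp add: e_def dvd_trans[OF gcd_dvd1 gcd_dvd2])
    ultimately have "e dvd C * n" by (metis dvd_add diff_add_cancel)
    then show ?thesis using ceq by (metis coprime_dvd_mult_right_iff coprime_iff_gcd_eq_1)
  qed
  have Tm: "M dvd m1 - m2" if "(m1, n) \<in> T" "(m2, n) \<in> T" for m1 m2 n
  proof -
    define x where "x = m1 - m2"
    have "N dvd (A * m1 - B * n) - (A * m2 - B * n)" using that unfolding T_def by (metis (no_types, lifting) case_prod_conv mem_Collect_eq dvd_diff)
    then have hA: "N dvd A * x" by (simp add: x_def algebra_simps)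
    have "N dvd (C * n - B * m2) - (C * n - B * m1)" using that unfolding T_def by (metis (no_types, lifting) case_prod_conv mem_Collect_eq dvd_diff)
    then have hB: "N dvd B * x" by (simp add: x_def algebra_simps)
    have "N dvd gcd (A * x) (B * x)" using hA hB by simp
    then have "N dvd gcd A B * \<bar>x\<bar>" by (simp add: gcd_mult_right abs_mult gcd.commute)
    moreover have "N dvd N * \<bar>x\<bar>" by simp
    ultimately have "N dvd gcd (gcd A B * \<bar>x\<bar>) (N * \<bar>x\<bar>)" by simp
    then have "N dvd e * \<bar>x\<bar>" by (simp add: e_def gcd_mult_right abs_mult gcd.commute)
    then have "e * M dvd e * \<bar>x\<bar>" using NM by simp
    then have "M dvd \<bar>x\<bar>" using e0 by simp
    then show ?thesis by (simp add: x_def)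
  qed
  define P where "P = snd ` T"
  define F where "F n = {m. (m, n) \<in> T}" for n
  have Tfin: "finite T"
  proof -
    have "T \<subseteq> {-\<lceil>W\<rceil>..\<lceil>W\<rceil>} \<times> {-\<lceil>W\<rceil>..\<lceil>W\<rceil>}"
    proof
      fix p assume "p \<in> T"
      then obtain m n where "p = (m, n)" "\<bar>real_of_int m\<bar> \<le> W" "\<bar>real_of_int n\<bar> \<le> W"
        unfolding T_def by auto
      then show "p \<in> {-\<lceil>W\<rceil>..\<lceil>W\<rceil>} \<times> {-\<lceil>W\<rceil>..\<lceil>W\<rceil>}" by auto linarith+
    qed
    then show ?thesis by (rule finite_subset) simp
  qed
  have Pfin: "finite P" using Tfin by (simp add: P_def)
  have TU: "T = (\<Union>n\<in>P. (\<lambda>m. (m, n)) ` F n)"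
    unfolding P_def F_def by force
  have cP: "real (card P) \<le> 2 * W / e + 1"
  proof (rule count_cls[OF Pfin e0])
    show "0 \<le> W" using hW by simp
    show "\<forall>x\<in>P. \<bar>real_of_int x\<bar> \<le> W" unfolding P_def T_def by auto
    show "\<forall>x\<in>P. \<forall>y\<in>P. e dvd x - y" unfolding P_def using Tn by fastforce
  qed
  have finF: "finite (F n)" for n
  proof -
    have "F n \<subseteq> fst ` T" unfolding F_def by force
    then show "finite (F n)" using Tfin by (meson finite_imageI finite_subset)
  qed
  have cF: "real (card (F n)) \<le> 2 * W / M + 1" for n
  proof (rule count_cls[OF finF M0])
    show "0 \<le> W" using hW by simp
    show "\<forall>x\<in>F n. \<bar>real_of_int x\<bar> \<le> W" unfolding F_def T_def by auto
    show "\<forall>x\<in>F n. \<forall>y\<in>F n. M dvd x - y" unfolding F_def using Tm by blast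
  qed
  have "card T \<le> (\<Sum>n\<in>P. card ((\<lambda>m. (m, n)) ` F n))"
    using TU card_UN_le[OF Pfin] by metis
  also have "\<dots> \<le> (\<Sum>n\<in>P. card (F n))"
    by (rule sum_mono) (rule card_image_le[OF finF])
  finally have "real (card T) \<le> (\<Sum>n\<in>P. real (card (F n)))"
    by (metis of_nat_le_iff of_nat_sum)
  also have "\<dots> \<le> (\<Sum>n\<in>P. 2 * W / M + 1)" by (rule sum_mono) (rule cF)
  also have "\<dots> = real (card P) * (2 * W / M + 1)" by simp
  also have "\<dots> \<le> (2 * W / e + 1) * (2 * W / M + 1)"
    by (rule mult_right_mono[OF cP]) (use hW M0 in simp)
  finally have cT: "real (card T) \<le> (2 * W / e + 1) * (2 * W / M + 1)" .
  have "card S \<le> card T" using ST Tfin by (simp add: card_mono)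
  then have cS: "real (card S) \<le> (2 * W / e + 1) * (2 * W / M + 1)" using cT by linarith
  have re: "real_of_int e \<ge> 1" "real_of_int M \<ge> 1" using e0 M0 by auto
  have expand: "(2 * W / e + 1) * (2 * W / M + 1) = 4 * W^2 / N + 2 * W / e + 2 * W / M + 1"
    using re NM by (simp add: field_simps power2_eq_square)
  have t1: "2 * W / e \<le> 2 * W" using re hW by (simp add: divide_le_eq)
  have t2: "2 * W / M \<le> 2 * W" using re hW by (simp add: divide_le_eq)
  have sqd: "sqrt (real_of_int d) \<le> real_of_int N"
  proof -
    have "d \<le> N^2" using dN N0 by (simp add: zdvd_imp_le)
    then have "real_of_int d \<le> (real_of_int N)^2" by (metis of_int_le_iff of_int_power)
    then have "sqrt (real_of_int d) \<le> sqrt ((real_of_int N)^2)" by (rule real_sqrt_le_mono)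
    then show ?thesis using N0 by simp
  qed
  have sq0: "sqrt (real_of_int d) > 0" using hd by simp
  have t3: "4 * W^2 / N \<le> 4 * W^2 / sqrt (real_of_int d)"
    by (rule divide_left_mono) (use sqd sq0 N0 in auto)
  have "real (card S) \<le> 4 * W^2 / sqrt (real_of_int d) + 5 * W"
    using cS expand t1 t2 t3 hW by linarith
  also have "\<dots> \<le> 5 * (W^2 / sqrt (real_of_int d) + W)"
    using sq0 hW by (simp add: field_simps)
  finally show "real (card S) \<le> 5 * (W^2 / sqrt (real_of_int d) + W)" .
qed simp

end
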